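(* Let $A$ be a locally-complex Cayley--Dickson algebra and let $f(x)=x^n+a_{n-1}x^{n-1}+\dots+a_0\in A[x]$ be monic with $n\ge1$. Then every root $r\in A$ of $f(x)$ and every root $r\in A$ of $f'(x)$ satisfies $|r|<R_1(f)$, $|r|<R_2(f)$ and $|r|\le R_3(f)$, where $R_1(f)=\sqrt{1+\sum_{k=0}^{n-1}|a_k|^2}$, $R_2(f)=1+\max_{0\le k\le n-1}|a_k|$, $R_3(f)=\max\{1,\sum_{k=0}^{n-1}|a_k|\}$. In terms of the spectral radius: $\rho(f),\rho(f')<R_1(f)$, $\rho(f),\rho(f')<R_2(f)$, $\rho(f),\rho(f')\le R_3(f)$.
   Context: Real Cayley--Dickson algebras: $A_0=\mathbb{R}$ with identity involution, $A_{k+1}=A_k\{\gamma_k\}=A_k\times A_k$ with product $(a,b)(c,d)=(ac+\gamma_k\bar d b,\ da+b\bar c)$ and involution $\overline{(a,b)}=(\bar a,-b)$. A real unital algebra is locally-complex if every non-real element generates a subalgebra isomorphic to $\mathbb{C}$ (for Cayley--Dickson algebras: all $\gamma_k=-1$ up to isomorphism). Norm $\mathrm{n}(\lambda)=\bar\lambda\lambda$, $|\lambda|=\sqrt{\mathrm{n}(\lambda)}$ (Euclidean norm). $A[x]=A\otimes_{\mathbb{R}}\mathbb{R}[x]$ with central $x$; substitution $f(r)=\sum_k a_k(r^k)$; formal derivative $f'(x)=\sum_k ka_kx^{k-1}$. The spectral radius of $g\in A[x]$ is $\rho(g)=\sup\{|\lambda|:\lambda\in A,\ g(\lambda)=0\}$.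 *)

theory Defs
  imports Complex_Main
begin

text \<open>Real Cayley--Dickson algebra A_m with all gamma_k = -1 (the locally-complex ones,
 up to isomorphism).  Elements of A_m are coordinate vectors nat => real supported on
 {0..<2^m}; an element of A_(m+1) is the pair (a,b) of A_m-elements, a = first half of
 coordinates, b = second half.\<close>

definition cd_carrier :: "nat \<Rightarrow> (nat \<Rightarrow> real) set" where
  "cd_carrier m = {x. \<forall>i\<ge>2^m. x i = 0}"

definition cd_lo :: "nat \<Rightarrow> (nat \<Rightarrow> real) \<Rightarrow> (nat \<Rightarrow> real)" where
  "cd_lo m x = (\<lambda>i. if i < 2^m then x i else 0)"

definition cd_hi :: "nat \<Rightarrow> (nat \<Rightarrow> real) \<Rightarrow> (nat \<Rightarrow> real)" where
  "cd_hi m x = (\<lambda>i. if i < 2^m then x (i + 2^m) else 0)"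

definition cd_join :: "nat \<Rightarrow> (nat \<Rightarrow> real) \<Rightarrow> (nat \<Rightarrow> real) \<Rightarrow> (nat \<Rightarrow> real)" where
  "cd_join m a b = (\<lambda>i. if i < 2^m then a i else if i < 2 * 2^m then b (i - 2^m) else 0)"

definition cd_zero :: "nat \<Rightarrow> real" where "cd_zero = (\<lambda>i. 0)"
definition cd_one :: "nat \<Rightarrow> real" where "cd_one = (\<lambda>i. if i = 0 then 1 else 0)"
definition cd_add :: "(nat \<Rightarrow> real) \<Rightarrow> (nat \<Rightarrow> real) \<Rightarrow> (nat \<Rightarrow> real)" where
  "cd_add x y = (\<lambda>i. x i + y i)"
definition cd_neg :: "(nat \<Rightarrow> real) \<Rightarrow> (nat \<Rightarrow> real)" where
  "cd_neg x = (\<lambda>i. - x i)"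
definition cd_scale :: "real \<Rightarrow> (nat \<Rightarrow> real) \<Rightarrow> (nat \<Rightarrow> real)" where
  "cd_scale c x = (\<lambda>i. c * x i)"

fun cd_cnj :: "nat \<Rightarrow> (nat \<Rightarrow> real) \<Rightarrow> (nat \<Rightarrow> real)" where
  "cd_cnj 0 x = (\<lambda>i. if i = 0 then x 0 else 0)"
| "cd_cnj (Suc m) x = cd_join m (cd_cnj m (cd_lo m x)) (cd_neg (cd_hi m x))"

text \<open>Product: (a,b)(c,d) = (ac + gamma conj(d) b, da + b conj(c)) with gamma = -1.\<close>
fun cd_mul :: "nat \<Rightarrow> (nat \<Rightarrow> real) \<Rightarrow> (nat \<Rightarrow> real) \<Rightarrow> (nat \<Rightarrow> real)" where
  "cd_mul 0 x y = (\<lambda>i. if i = 0 then x 0 * y 0 else 0)"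
| "cd_mul (Suc m) x y =
     cd_join m
       (cd_add (cd_mul m (cd_lo m x) (cd_lo m y))
               (cd_scale (-1) (cd_mul m (cd_cnj m (cd_hi m y)) (cd_hi m x))))
       (cd_add (cd_mul m (cd_hi m y) (cd_lo m x))
               (cd_mul m (cd_hi m x) (cd_cnj m (cd_lo m y))))"

text \<open>n(x) = conj(x) x is real (a multiple of 1); |x| = sqrt(n(x)).\<close>
definition cd_abs :: "nat \<Rightarrow> (nat \<Rightarrow> real) \<Rightarrow> real" where
  "cd_abs m x = sqrt (cd_mul m (cd_cnj m x) x 0)"

fun cd_pow :: "nat \<Rightarrow> (nat \<Rightarrow> real) \<Rightarrow> nat \<Rightarrow> (nat \<Rightarrow> real)" where
  "cd_pow m x 0 = cd_one"
| "cd_pow m x (Suc k) = cd_mul m x (cd_pow m x k)"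

definition cd_poly_eval ::
  "nat \<Rightarrow> (nat \<Rightarrow> nat \<Rightarrow> real) \<Rightarrow> nat \<Rightarrow> (nat \<Rightarrow> real) \<Rightarrow> (nat \<Rightarrow> real)" where
  "cd_poly_eval m c d r = (\<lambda>i. \<Sum>k\<le>d. cd_mul m (c k) (cd_pow m r k) i)"

definition monic_coeffs :: "nat \<Rightarrow> (nat \<Rightarrow> nat \<Rightarrow> real) \<Rightarrow> nat \<Rightarrow> nat \<Rightarrow> real" where
  "monic_coeffs n a = (\<lambda>k. if k < n then a k else if k = n then cd_one else cd_zero)"

definition deriv_coeffs :: "(nat \<Rightarrow> nat \<Rightarrow> real) \<Rightarrow> nat \<Rightarrow> nat \<Rightarrow> real" where
  "deriv_coeffs c = (\<lambda>k. cd_scale (real (Suc k)) (c (Suc k)))"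

text \<open>Spectral radius rho(g) = sup{|l| : l in A, g(l) = 0}; the empty sup is taken as 0.\<close>
definition cd_spec_rad :: "nat \<Rightarrow> (nat \<Rightarrow> nat \<Rightarrow> real) \<Rightarrow> nat \<Rightarrow> real" where
  "cd_spec_rad m c d =
     Sup (insert 0 {cd_abs m r | r. r \<in> cd_carrier m \<and> cd_poly_eval m c d r = cd_zero})"

definition R1 :: "nat \<Rightarrow> nat \<Rightarrow> (nat \<Rightarrow> nat \<Rightarrow> real) \<Rightarrow> real" where
  "R1 m n a = sqrt (1 + (\<Sum>k<n. (cd_abs m (a k))\<^sup>2))"
definition R2 :: "nat \<Rightarrow> nat \<Rightarrow> (nat \<Rightarrow> nat \<Rightarrow> real) \<Rightarrow> real" where
  "R2 m n a = 1 + (MAX k\<in>{..<n}. cd_abs m (a k))"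
definition R3 :: "nat \<Rightarrow> nat \<Rightarrow> (nat \<Rightarrow> nat \<Rightarrow> real) \<Rightarrow> real" where
  "R3 m n a = max 1 (\<Sum>k<n. cd_abs m (a k))"

end

theory Submission
  imports Defs
begin

lemma carrier_iff: "x \<in> cd_carrier m \<longleftrightarrow> (\<forall>i\<ge>2^m. x i = 0)"
  by (simp add: cd_carrier_def)

lemma cnj_closed: "cd_cnj m x = (\<lambda>i. if i = 0 then x 0 else if i < 2^m then - x i else 0)"
proof (induction m arbitrary: x)
  case 0 then show ?case by auto
next
  case (Suc m)
  show ?case
    by (auto simp: Suc cd_join_def cd_lo_def cd_hi_def cd_neg_def fun_eq_iff)
qed

lemma join_carrier[simp]: "cd_join m a b \<in> cd_carrier (Suc m)"
  by (auto simp: cd_join_def carrier_iff)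

lemma mul_carrier[simp]: "cd_mul m x y \<in> cd_carrier m"
  by (cases m) (auto simp: carrier_iff cd_join_def)

lemma cnj_carrier[simp]: "cd_cnj m x \<in> cd_carrier m"
  by (auto simp: cnj_closed carrier_iff)

lemma lo_carrier[simp]: "cd_lo m x \<in> cd_carrier m"
  and hi_carrier[simp]: "cd_hi m x \<in> cd_carrier m"
  by (auto simp: cd_lo_def cd_hi_def carrier_iff)

lemma one_carrier[simp]: "cd_one \<in> cd_carrier m" and zero_carrier[simp]: "cd_zero \<in> cd_carrier m"
  by (auto simp: cd_one_def cd_zero_def carrier_iff)

lemma add_carrier[simp]: "x \<in> cd_carrier m \<Longrightarrow> y \<in> cd_carrier m \<Longrightarrow> cd_add x y \<in> cd_carrier m"
  and neg_carrier[simp]: "x \<in> cd_carrier m \<Longrightarrow> cd_neg x \<in> cd_carrier m"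
  and scale_carrier[simp]: "x \<in> cd_carrier m \<Longrightarrow> cd_scale t x \<in> cd_carrier m"
  by (auto simp: cd_add_def cd_neg_def cd_scale_def carrier_iff)

lemma lo_join[simp]: "a \<in> cd_carrier m \<Longrightarrow> cd_lo m (cd_join m a b) = a"
  by (auto simp: cd_lo_def cd_join_def carrier_iff fun_eq_iff)

lemma hi_join[simp]: "b \<in> cd_carrier m \<Longrightarrow> cd_hi m (cd_join m a b) = b"
  by (auto simp: cd_hi_def cd_join_def carrier_iff fun_eq_iff)

lemma join_lo_hi: "x \<in> cd_carrier (Suc m) \<Longrightarrow> cd_join m (cd_lo m x) (cd_hi m x) = x"
  by (auto simp: cd_lo_def cd_hi_def cd_join_def carrier_iff fun_eq_iff)

lemma carrier_Suc_E:
  assumes "x \<in> cd_carrier (Suc m)"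
  obtains a b where "a \<in> cd_carrier m" "b \<in> cd_carrier m" "x = cd_join m a b"
  using join_lo_hi[OF assms] lo_carrier hi_carrier by metis

lemma lo_add[simp]: "cd_lo m (cd_add x y) = cd_add (cd_lo m x) (cd_lo m y)"
  and hi_add[simp]: "cd_hi m (cd_add x y) = cd_add (cd_hi m x) (cd_hi m y)"
  and lo_scale[simp]: "cd_lo m (cd_scale t x) = cd_scale t (cd_lo m x)"
  and hi_scale[simp]: "cd_hi m (cd_scale t x) = cd_scale t (cd_hi m x)"
  and lo_neg[simp]: "cd_lo m (cd_neg x) = cd_neg (cd_lo m x)"
  and hi_neg[simp]: "cd_hi m (cd_neg x) = cd_neg (cd_hi m x)"
  by (auto simp: cd_lo_def cd_hi_def cd_add_def cd_scale_def cd_neg_def fun_eq_iff)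

lemma cnj_add[simp]: "cd_cnj m (cd_add x y) = cd_add (cd_cnj m x) (cd_cnj m y)"
  and cnj_scale[simp]: "cd_cnj m (cd_scale t x) = cd_scale t (cd_cnj m x)"
  and cnj_neg[simp]: "cd_cnj m (cd_neg x) = cd_neg (cd_cnj m x)"
  by (auto simp: cnj_closed cd_add_def cd_scale_def cd_neg_def fun_eq_iff)

lemma mul_add: "cd_mul m (cd_add x y) z = cd_add (cd_mul m x z) (cd_mul m y z) \<and>
   cd_mul m z (cd_add x y) = cd_add (cd_mul m z x) (cd_mul m z y)"
proof (induction m arbitrary: x y z)
  case 0 then show ?case by (auto simp: cd_add_def fun_eq_iff algebra_simps)
next
  case (Suc m)
  show ?case by (simp add: Suc) (auto simp: cd_join_def cd_add_def cd_scale_def fun_eq_iff)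
qed

lemmas mul_add_left = mul_add[THEN conjunct1] and mul_add_right = mul_add[THEN conjunct2]

lemma mul_scale: "cd_mul m (cd_scale t x) z = cd_scale t (cd_mul m x z) \<and>
   cd_mul m z (cd_scale t x) = cd_scale t (cd_mul m z x)"
proof (induction m arbitrary: x z)
  case 0 then show ?case by (auto simp: cd_scale_def fun_eq_iff algebra_simps)
next
  case (Suc m)
  show ?case by (simp add: Suc) (auto simp: cd_join_def cd_add_def cd_scale_def fun_eq_iff algebra_simps)
qed

lemmas mul_scale_left = mul_scale[THEN conjunct1] and mul_scale_right = mul_scale[THEN conjunct2]

lemma neg_eq_scale: "cd_neg x = cd_scale (-1) x"
  by (simp add: cd_neg_def cd_scale_def fun_eq_iff)

lemma mul_join: "a \<in> cd_carrier m \<Longrightarrow> b \<in> cd_carrier m \<Longrightarrow> c \<in> cd_carrier m \<Longrightarrow> d \<in> cd_carrier m \<Longrightarrow>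
  cd_mul (Suc m) (cd_join m a b) (cd_join m c d) =
  cd_join m (cd_add (cd_mul m a c) (cd_scale (-1) (cd_mul m (cd_cnj m d) b)))
            (cd_add (cd_mul m d a) (cd_mul m b (cd_cnj m c)))"
  by simp

lemma cnj_join: "a \<in> cd_carrier m \<Longrightarrow> b \<in> cd_carrier m \<Longrightarrow>
  cd_cnj (Suc m) (cd_join m a b) = cd_join m (cd_cnj m a) (cd_scale (-1) b)"
  by (simp add: neg_eq_scale)

lemma add_join: "cd_add (cd_join m a b) (cd_join m c d) = cd_join m (cd_add a c) (cd_add b d)"
  by (auto simp: cd_join_def cd_add_def fun_eq_iff)

lemma scale_join: "cd_scale t (cd_join m a b) = cd_join m (cd_scale t a) (cd_scale t b)"
  by (auto simp: cd_join_def cd_scale_def fun_eq_iff)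

lemma one_join: "cd_one = cd_join m cd_one cd_zero"
  by (auto simp: cd_join_def cd_one_def cd_zero_def fun_eq_iff)

lemma zero_join: "cd_zero = cd_join m cd_zero cd_zero"
  by (auto simp: cd_join_def cd_zero_def fun_eq_iff)

lemma join_inj: "a \<in> cd_carrier m \<Longrightarrow> b \<in> cd_carrier m \<Longrightarrow> c \<in> cd_carrier m \<Longrightarrow> d \<in> cd_carrier m \<Longrightarrow>
   cd_join m a b = cd_join m c d \<longleftrightarrow> a = c \<and> b = d"
  by (metis lo_join hi_join)

lemma scale_zero[simp]: "cd_scale 0 x = cd_zero" and scale_one[simp]: "cd_scale 1 x = x"
  and scale_scale[simp]: "cd_scale s (cd_scale t x) = cd_scale (s*t) x"
  and add_zero[simp]: "cd_add x cd_zero = x" and zero_add[simp]: "cd_add cd_zero x = x"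
  and scale_zero2[simp]: "cd_scale t cd_zero = cd_zero"
  by (auto simp: cd_scale_def cd_zero_def cd_add_def fun_eq_iff)

lemma mul_zero[simp]: "cd_mul m x cd_zero = cd_zero" and zero_mul[simp]: "cd_mul m cd_zero x = cd_zero"
  using mul_scale_right[of m x 0 cd_zero] mul_scale_left[of m 0 cd_zero x] by simp_all

lemma cnj_one[simp]: "cd_cnj m cd_one = cd_one" and cnj_zero[simp]: "cd_cnj m cd_zero = cd_zero"
  by (auto simp: cnj_closed cd_one_def cd_zero_def fun_eq_iff)

lemma cnj_cnj[simp]: "x \<in> cd_carrier m \<Longrightarrow> cd_cnj m (cd_cnj m x) = x"
  by (auto simp: cnj_closed carrier_iff fun_eq_iff)

lemma one_mul_mul_one: "x \<in> cd_carrier m \<Longrightarrow> cd_mul m cd_one x = x \<and> cd_mul m x cd_one = x"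
proof (induction m arbitrary: x)
  case 0 then show ?case by (auto simp: cd_one_def carrier_iff fun_eq_iff)
next
  case (Suc m)
  then obtain a b where ab: "a \<in> cd_carrier m" "b \<in> cd_carrier m" "x = cd_join m a b"
    by (elim carrier_Suc_E)
  have o: "cd_one = cd_join m cd_one cd_zero" by (rule one_join)
  have 1: "cd_mul (Suc m) cd_one x = x" unfolding ab(3)
    apply (subst o) apply (subst mul_join)
    using ab Suc.IH[of a] Suc.IH[of b] by (simp_all del: cd_mul.simps)
  have 2: "cd_mul (Suc m) x cd_one = x" unfolding ab(3)
    apply (subst o) apply (subst mul_join)
    using ab Suc.IH[of a] Suc.IH[of b] by (simp_all del: cd_mul.simps)
  show ?case using 1 2 by simp
qed

lemma one_mul[simp]: "x \<in> cd_carrier m \<Longrightarrow> cd_mul m cd_one x = x"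
  and mul_one[simp]: "x \<in> cd_carrier m \<Longrightarrow> cd_mul m x cd_one = x"
  using one_mul_mul_one by auto

definition ip :: "nat \<Rightarrow> (nat \<Rightarrow> real) \<Rightarrow> (nat \<Rightarrow> real) \<Rightarrow> real" where
  "ip m x y = (\<Sum>i<2^m. x i * y i)"

lemma sum_double: "(\<Sum>i<(N::nat)+N. f i) = (\<Sum>i<N. f i) + (\<Sum>i<N. f (i + N)::real)"
proof -
  have "(\<Sum>i<N+N. f i) = (\<Sum>i\<in>{0..<N}. f i) + (\<Sum>i\<in>{N..<N+N}. f i)"
    using sum.atLeastLessThan_concat[of 0 N "N+N" f] by (simp add: atLeast0LessThan)
  also have "(\<Sum>i\<in>{N..<N+N}. f i) = (\<Sum>i<N. f (i + N))"
    using sum.shift_bounds_nat_ivl[of f 0 N N] by (simp add: atLeast0LessThan)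
  finally show ?thesis by (simp add: atLeast0LessThan)
qed

lemma ip_join: "ip (Suc m) (cd_join m a b) (cd_join m c d) = ip m a c + ip m b d"
proof -
  have "ip (Suc m) (cd_join m a b) (cd_join m c d) =
     (\<Sum>i<2^m+2^m. cd_join m a b i * cd_join m c d i)" by (simp add: ip_def mult_2)
  also have "\<dots> = ip m a c + ip m b d"
    unfolding sum_double ip_def by (auto simp: cd_join_def intro!: sum.cong arg_cong2[where f="(+)"])
  finally show ?thesis .
qed

lemma ip_add_left: "ip m (cd_add x y) z = ip m x z + ip m y z"
  and ip_add_right: "ip m z (cd_add x y) = ip m z x + ip m z y"
  and ip_scale_left: "ip m (cd_scale t x) z = t * ip m x z"
  and ip_scale_right: "ip m z (cd_scale t x) = t * ip m z x"
  and ip_zero_left[simp]: "ip m cd_zero z = 0" and ip_zero_right[simp]: "ip m z cd_zero = 0"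
  by (auto simp: ip_def cd_add_def cd_scale_def cd_zero_def algebra_simps sum.distrib sum_distrib_left)

lemma ip_sym: "ip m x y = ip m y x"
  by (simp add: ip_def mult.commute)

lemma ip_one_right: "ip m x cd_one = x 0" and ip_one_left: "ip m cd_one x = x 0"
proof -
  have "(\<Sum>i<2^m. x i * cd_one i) = (\<Sum>i<2^m. if i = 0 then x i else 0)"
    "(\<Sum>i<2^m. cd_one i * x i) = (\<Sum>i<2^m. if i = 0 then x i else 0)"
    by (rule sum.cong; simp add: cd_one_def)+
  then show "ip m x cd_one = x 0" "ip m cd_one x = x 0" by (simp_all add: ip_def)
qed

lemma ip_cnj: "ip m (cd_cnj m x) (cd_cnj m y) = ip m x y"
  by (auto simp: ip_def cnj_closed intro!: sum.cong)

lemma ip_self_nonneg: "0 \<le> ip m x x"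
  by (simp add: ip_def sum_nonneg)

lemma ip_self_zero: "x \<in> cd_carrier m \<Longrightarrow> ip m x x = 0 \<Longrightarrow> x = cd_zero"
  by (auto simp: ip_def carrier_iff cd_zero_def fun_eq_iff sum_nonneg_eq_0_iff) (metis lessThan_iff not_le)

lemma add_scale_same: "cd_add (cd_scale p x) (cd_scale q x) = cd_scale (p+q) x"
  and add_neg_self: "cd_add y (cd_scale (-1) y) = cd_zero"
  and scale_add: "cd_scale t (cd_add x y) = cd_add (cd_scale t x) (cd_scale t y)"
  and add_commute: "cd_add x y = cd_add y x"
  by (auto simp: cd_add_def cd_scale_def cd_zero_def fun_eq_iff algebra_simps)

lemma ip0: "ip 0 x y = x 0 * y 0" by (simp add: ip_def)

lemma norm_mul: "x \<in> cd_carrier m \<Longrightarrow> cd_mul m (cd_cnj m x) x = cd_scale (ip m x x) cd_one"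
proof (induction m arbitrary: x)
  case 0 then show ?case by (auto simp: cd_scale_def cd_one_def ip0 fun_eq_iff)
next
  case (Suc m)
  then obtain a b where ab: "a \<in> cd_carrier m" "b \<in> cd_carrier m" "x = cd_join m a b"
    by (elim carrier_Suc_E)
  have "cd_mul (Suc m) (cd_cnj (Suc m) x) x
     = cd_join m (cd_add (cd_mul m (cd_cnj m a) a) (cd_scale (-1) (cd_mul m (cd_cnj m b) (cd_scale (-1) b))))
            (cd_add (cd_mul m b (cd_cnj m a)) (cd_mul m (cd_scale (-1) b) (cd_cnj m a)))"
    unfolding ab(3) using ab by (simp only: cnj_join mul_join cnj_carrier scale_carrier cnj_cnj)
  also have "\<dots> = cd_join m (cd_scale (ip m a a + ip m b b) cd_one) cd_zero"
    using ab Suc.IH[of a] Suc.IH[of b]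
    by (simp add: mul_scale_left mul_scale_right add_scale_same add_neg_self del: cd_mul.simps)
  also have "\<dots> = cd_scale (ip (Suc m) x x) cd_one"
    unfolding ab(3) ip_join by (metis one_join scale_join scale_zero2)
  finally show ?case .
qed

lemma antihom: "x \<in> cd_carrier m \<Longrightarrow> y \<in> cd_carrier m \<Longrightarrow>
   cd_cnj m (cd_mul m x y) = cd_mul m (cd_cnj m y) (cd_cnj m x)"
proof (induction m arbitrary: x y)
  case 0 then show ?case by (auto simp: fun_eq_iff)
next
  case (Suc m)
  obtain a b where ab: "a \<in> cd_carrier m" "b \<in> cd_carrier m" "x = cd_join m a b"
    using Suc.prems(1) by (elim carrier_Suc_E)
  obtain c d where cd: "c \<in> cd_carrier m" "d \<in> cd_carrier m" "y = cd_join m c d"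
    using Suc.prems(2) by (elim carrier_Suc_E)
  have L: "cd_cnj (Suc m) (cd_mul (Suc m) x y) =
     cd_join m (cd_add (cd_mul m (cd_cnj m c) (cd_cnj m a)) (cd_scale (-1) (cd_mul m (cd_cnj m b) d)))
               (cd_scale (-1) (cd_add (cd_mul m d a) (cd_mul m b (cd_cnj m c))))"
    unfolding ab(3) cd(3) using ab cd Suc.IH[of a c] Suc.IH[of "cd_cnj m d" b]
    by (simp add: mul_join cnj_join del: cd_mul.simps cd_cnj.simps)
  have R: "cd_mul (Suc m) (cd_cnj (Suc m) y) (cd_cnj (Suc m) x) =
     cd_join m (cd_add (cd_mul m (cd_cnj m c) (cd_cnj m a)) (cd_scale (-1) (cd_mul m (cd_cnj m b) d)))
               (cd_scale (-1) (cd_add (cd_mul m d a) (cd_mul m b (cd_cnj m c))))"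
    unfolding ab(3) cd(3) using ab cd
    by (simp add: mul_join cnj_join mul_scale_left mul_scale_right scale_add add_commute del: cd_mul.simps cd_cnj.simps)
  show ?case using L R by simp
qed

lemma R_imp_L:
  assumes R: "\<And>x y z. x \<in> cd_carrier m \<Longrightarrow> y \<in> cd_carrier m \<Longrightarrow> z \<in> cd_carrier m \<Longrightarrow>
       ip m (cd_mul m x y) z = ip m x (cd_mul m z (cd_cnj m y))"
    and p: "p \<in> cd_carrier m" and q: "q \<in> cd_carrier m" and r: "r \<in> cd_carrier m"
  shows "ip m (cd_mul m p q) r = ip m q (cd_mul m (cd_cnj m p) r)"
proof -
  have "ip m (cd_mul m p q) r = ip m (cd_cnj m (cd_mul m p q)) (cd_cnj m r)" by (simp add: ip_cnj)
  also have "\<dots> = ip m (cd_mul m (cd_cnj m q) (cd_cnj m p)) (cd_cnj m r)" using p q by (simp add: antihom)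
  also have "\<dots> = ip m (cd_cnj m q) (cd_mul m (cd_cnj m r) p)" using R[of "cd_cnj m q" "cd_cnj m p" "cd_cnj m r"] p by simp
  also have "\<dots> = ip m (cd_cnj m (cd_cnj m q)) (cd_cnj m (cd_mul m (cd_cnj m r) p))" by (simp add: ip_cnj)
  also have "\<dots> = ip m q (cd_mul m (cd_cnj m p) r)" using q r p by (simp add: antihom)
  finally show ?thesis .
qed

lemma Rid: "x \<in> cd_carrier m \<Longrightarrow> y \<in> cd_carrier m \<Longrightarrow> z \<in> cd_carrier m \<Longrightarrow>
   ip m (cd_mul m x y) z = ip m x (cd_mul m z (cd_cnj m y))"
proof (induction m arbitrary: x y z)
  case 0 then show ?case by (simp add: ip0 mult.commute)
next
  case (Suc m)
  obtain a b where ab: "a \<in> cd_carrier m" "b \<in> cd_carrier m" "x = cd_join m a b"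
    using Suc.prems(1) by (elim carrier_Suc_E)
  obtain c d where cd: "c \<in> cd_carrier m" "d \<in> cd_carrier m" "y = cd_join m c d"
    using Suc.prems(2) by (elim carrier_Suc_E)
  obtain e f where ef: "e \<in> cd_carrier m" "f \<in> cd_carrier m" "z = cd_join m e f"
    using Suc.prems(3) by (elim carrier_Suc_E)
  have L: "\<And>p q r. p \<in> cd_carrier m \<Longrightarrow> q \<in> cd_carrier m \<Longrightarrow> r \<in> cd_carrier m \<Longrightarrow>
     ip m (cd_mul m p q) r = ip m q (cd_mul m (cd_cnj m p) r)"
    apply (rule R_imp_L[of m]) apply (rule Suc.IH) apply assumption+ done
  have lhs: "ip (Suc m) (cd_mul (Suc m) x y) z =
     ip m (cd_mul m a c) e - ip m (cd_mul m (cd_cnj m d) b) e + ip m (cd_mul m d a) f + ip m (cd_mul m b (cd_cnj m c)) f"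
    unfolding ab(3) cd(3) ef(3) using ab cd ef
    by (simp add: mul_join ip_join ip_add_left ip_scale_left del: cd_mul.simps cd_cnj.simps)
  have rhs: "ip (Suc m) x (cd_mul (Suc m) z (cd_cnj (Suc m) y)) =
     ip m a (cd_mul m e (cd_cnj m c)) + ip m a (cd_mul m (cd_cnj m d) f) - ip m b (cd_mul m d e) + ip m b (cd_mul m f c)"
    unfolding ab(3) cd(3) ef(3) using ab cd ef
    by (simp add: mul_join cnj_join ip_join ip_add_right ip_scale_right mul_scale_left mul_scale_right del: cd_mul.simps cd_cnj.simps)
  have h1: "ip m (cd_mul m a c) e = ip m a (cd_mul m e (cd_cnj m c))" by (rule Suc.IH[OF ab(1) cd(1) ef(1)])
  have h2: "ip m (cd_mul m b (cd_cnj m c)) f = ip m b (cd_mul m f c)" using Suc.IH[OF ab(2) cnj_carrier[of m c] ef(2)] cnj_cnj[OF cd(1)] by (simp only:)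
  have h3: "ip m (cd_mul m (cd_cnj m d) b) e = ip m b (cd_mul m d e)" using L[OF cnj_carrier[of m d] ab(2) ef(1)] cnj_cnj[OF cd(2)] by (simp only:)
  have h4: "ip m (cd_mul m d a) f = ip m a (cd_mul m (cd_cnj m d) f)" using L[OF cd(2) ab(1) ef(2)] .
  show ?case using lhs rhs h1 h2 h3 h4 by linarith
qed

lemma Lid: "p \<in> cd_carrier m \<Longrightarrow> q \<in> cd_carrier m \<Longrightarrow> r \<in> cd_carrier m \<Longrightarrow>
   ip m (cd_mul m p q) r = ip m q (cd_mul m (cd_cnj m p) r)"
  by (rule R_imp_L[OF Rid])

definition rv :: "(nat \<Rightarrow> real) \<Rightarrow> (nat \<Rightarrow> real)" where
  "rv r = (\<lambda>i. if i = 0 then 0 else r i)"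

definition sv :: "nat \<Rightarrow> (nat \<Rightarrow> real) \<Rightarrow> real" where
  "sv m r = sqrt (ip m (rv r) (rv r))"

definition wc :: "nat \<Rightarrow> (nat \<Rightarrow> real) \<Rightarrow> complex" where
  "wc m r = Complex (r 0) (sv m r)"

definition gam :: "nat \<Rightarrow> (nat \<Rightarrow> real) \<Rightarrow> (nat \<Rightarrow> real) \<Rightarrow> complex" where
  "gam m r x = Complex (ip m x cd_one) (ip m x (rv r) / sv m r)"

fun pq :: "real \<Rightarrow> real \<Rightarrow> nat \<Rightarrow> real \<times> real" where
  "pq a s2 0 = (1, 0)"
| "pq a s2 (Suc k) = (a * fst (pq a s2 k) - s2 * snd (pq a s2 k), a * snd (pq a s2 k) + fst (pq a s2 k))"

lemma rv_carrier[simp]: "r \<in> cd_carrier m \<Longrightarrow> rv r \<in> cd_carrier m"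
  by (auto simp: rv_def carrier_iff)

lemma r_decomp: "r = cd_add (cd_scale (r 0) cd_one) (rv r)"
  by (auto simp: rv_def cd_add_def cd_scale_def cd_one_def fun_eq_iff)

lemma cnj_rv: "r \<in> cd_carrier m \<Longrightarrow> cd_cnj m (rv r) = cd_scale (-1) (rv r)"
  by (auto simp: cnj_closed rv_def cd_scale_def carrier_iff fun_eq_iff)

lemma ip_one_rv[simp]: "ip m cd_one (rv r) = 0" "ip m (rv r) cd_one = 0"
  by (simp_all add: ip_one_left ip_one_right rv_def)

lemma ip_one_one[simp]: "ip m cd_one cd_one = 1"
proof -
  have "ip m cd_one cd_one = cd_one 0" by (rule ip_one_left)
  also have "\<dots> = 1" by (simp add: cd_one_def)
  finally show ?thesis .
qed

lemma s2_nonneg: "0 \<le> ip m (rv r) (rv r)" by (rule ip_self_nonneg)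

lemma sv_sq: "sv m r * sv m r = ip m (rv r) (rv r)"
  unfolding sv_def using s2_nonneg by simp

lemma vv: "r \<in> cd_carrier m \<Longrightarrow> cd_mul m (rv r) (rv r) = cd_scale (- ip m (rv r) (rv r)) cd_one"
proof -
  assume r: "r \<in> cd_carrier m"
  have "cd_mul m (cd_cnj m (rv r)) (rv r) = cd_scale (ip m (rv r) (rv r)) cd_one"
    using r by (simp add: norm_mul)
  then have "cd_scale (-1) (cd_mul m (rv r) (rv r)) = cd_scale (ip m (rv r) (rv r)) cd_one"
    using r by (simp add: cnj_rv mul_scale_left)
  then have "cd_scale (-1) (cd_scale (-1) (cd_mul m (rv r) (rv r))) = cd_scale (-1) (cd_scale (ip m (rv r) (rv r)) cd_one)"
    by simp
  then show ?thesis by simp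
qed

lemma v_cnjv: "r \<in> cd_carrier m \<Longrightarrow> cd_mul m (rv r) (cd_cnj m (rv r)) = cd_scale (ip m (rv r) (rv r)) cd_one"
  by (simp add: cnj_rv mul_scale_right vv)

lemma pow_form: "r \<in> cd_carrier m \<Longrightarrow>
  cd_pow m r k = cd_add (cd_scale (fst (pq (r 0) (ip m (rv r) (rv r)) k)) cd_one)
                        (cd_scale (snd (pq (r 0) (ip m (rv r) (rv r)) k)) (rv r))"
proof (induction k)
  case 0 then show ?case by (simp add: cd_add_def cd_scale_def fun_eq_iff cd_one_def)
next
  case (Suc k)
  let ?p = "fst (pq (r 0) (ip m (rv r) (rv r)) k)" and ?q = "snd (pq (r 0) (ip m (rv r) (rv r)) k)"
  let ?X = "cd_add (cd_scale ?p cd_one) (cd_scale ?q (rv r))"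
  have X: "?X \<in> cd_carrier m" using Suc.prems by simp
  have "cd_pow m r (Suc k) = cd_mul m (cd_add (cd_scale (r 0) cd_one) (rv r)) ?X"
    using Suc by (simp flip: r_decomp)
  also have "\<dots> = cd_add (cd_scale (fst (pq (r 0) (ip m (rv r) (rv r)) (Suc k))) cd_one)
                        (cd_scale (snd (pq (r 0) (ip m (rv r) (rv r)) (Suc k))) (rv r))"
    using X Suc.prems
    apply (simp add: mul_add_left mul_add_right mul_scale_left mul_scale_right vv del: cd_mul.simps)
    apply (simp add: cd_add_def cd_scale_def fun_eq_iff algebra_simps)
    done
  finally show ?case .
qed

lemma wpow: "wc m r ^ k = Complex (fst (pq (r 0) (ip m (rv r) (rv r)) k)) (sv m r * snd (pq (r 0) (ip m (rv r) (rv r)) k))"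
proof (induction k)
  case 0 then show ?case by (simp add: complex_eq_iff)
next
  case (Suc k)
  then show ?case using sv_sq[of m r]
    by (simp add: wc_def complex_eq_iff algebra_simps)
qed

lemma sv_zero: "r \<in> cd_carrier m \<Longrightarrow> sv m r = 0 \<Longrightarrow> rv r = cd_zero"
  unfolding sv_def by (rule ip_self_zero) auto

lemma mul_pow: "r \<in> cd_carrier m \<Longrightarrow> c \<in> cd_carrier m \<Longrightarrow>
  cd_mul m c (cd_pow m r k) = cd_add (cd_scale (fst (pq (r 0) (ip m (rv r) (rv r)) k)) c)
                        (cd_scale (snd (pq (r 0) (ip m (rv r) (rv r)) k)) (cd_mul m c (rv r)))"
  by (simp add: pow_form mul_add_right mul_scale_right del: cd_mul.simps cd_pow.simps)

lemma ip_cv_one: "r \<in> cd_carrier m \<Longrightarrow> c \<in> cd_carrier m \<Longrightarrow> ip m (cd_mul m c (rv r)) cd_one = - ip m c (rv r)"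
  by (simp add: Rid cnj_rv ip_scale_right del: cd_mul.simps)

lemma ip_cv_v: "r \<in> cd_carrier m \<Longrightarrow> c \<in> cd_carrier m \<Longrightarrow>
   ip m (cd_mul m c (rv r)) (rv r) = ip m (rv r) (rv r) * ip m c cd_one"
  by (simp add: Rid v_cnjv ip_scale_right del: cd_mul.simps)

lemma key1: "r \<in> cd_carrier m \<Longrightarrow> c \<in> cd_carrier m \<Longrightarrow>
   ip m (cd_mul m c (cd_pow m r k)) cd_one = Re (gam m r c * wc m r ^ k)"
proof -
  assume r: "r \<in> cd_carrier m" and c: "c \<in> cd_carrier m"
  let ?p = "fst (pq (r 0) (ip m (rv r) (rv r)) k)" and ?q = "snd (pq (r 0) (ip m (rv r) (rv r)) k)"
  have "ip m (cd_mul m c (cd_pow m r k)) cd_one = ?p * ip m c cd_one - ?q * ip m c (rv r)"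
    using r c by (simp add: mul_pow ip_add_left ip_scale_left ip_cv_one del: cd_mul.simps cd_pow.simps)
  also have "\<dots> = Re (gam m r c * wc m r ^ k)"
  proof (cases "sv m r = 0")
    case True
    then have "rv r = cd_zero" using r by (rule sv_zero[rotated])
    then show ?thesis using True by (simp add: gam_def wpow)
  next
    case False
    then show ?thesis by (simp add: gam_def wpow)
  qed
  finally show ?thesis .
qed

lemma key2: "r \<in> cd_carrier m \<Longrightarrow> c \<in> cd_carrier m \<Longrightarrow>
   ip m (cd_mul m c (cd_pow m r k)) (rv r) = sv m r * Im (gam m r c * wc m r ^ k)"
proof -
  assume r: "r \<in> cd_carrier m" and c: "c \<in> cd_carrier m"
  let ?p = "fst (pq (r 0) (ip m (rv r) (rv r)) k)" and ?q = "snd (pq (r 0) (ip m (rv r) (rv r)) k)"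
  have "ip m (cd_mul m c (cd_pow m r k)) (rv r) = ?p * ip m c (rv r) + ?q * (ip m (rv r) (rv r) * ip m c cd_one)"
    using r c by (simp add: mul_pow ip_add_left ip_scale_left ip_cv_v del: cd_mul.simps cd_pow.simps)
  also have "\<dots> = sv m r * Im (gam m r c * wc m r ^ k)"
  proof (cases "sv m r = 0")
    case True
    then have "rv r = cd_zero" using r by (rule sv_zero[rotated])
    then show ?thesis using True by (simp add: gam_def wpow)
  next
    case False
    then show ?thesis using sv_sq[of m r] by (simp add: gam_def wpow field_simps)
  qed
  finally show ?thesis .
qed

lemma ip_sum_left: "ip m (\<lambda>i. \<Sum>k\<in>K. g k i) z = (\<Sum>k\<in>K. ip m (g k) z)"
  unfolding ip_def sum_distrib_right by (rule sum.swap)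

lemma eval_root:
  assumes r: "r \<in> cd_carrier m" and c: "\<forall>k\<le>d. c k \<in> cd_carrier m"
    and root: "cd_poly_eval m c d r = cd_zero"
  shows "(\<Sum>k\<le>d. gam m r (c k) * wc m r ^ k) = 0"
proof (rule complex_eqI)
  have "0 = ip m (cd_poly_eval m c d r) cd_one" using root by simp
  also have "\<dots> = (\<Sum>k\<le>d. Re (gam m r (c k) * wc m r ^ k))"
    unfolding cd_poly_eval_def ip_sum_left using r c by (auto intro!: sum.cong simp: key1)
  finally show "Re (\<Sum>k\<le>d. gam m r (c k) * wc m r ^ k) = Re 0" by (simp add: Re_sum)
  show "Im (\<Sum>k\<le>d. gam m r (c k) * wc m r ^ k) = Im 0"
  proof (cases "sv m r = 0")
    case True
    then show ?thesis by (simp add: Im_sum gam_def wpow)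
  next
    case False
    have "0 = ip m (cd_poly_eval m c d r) (rv r)" using root by simp
    also have "\<dots> = (\<Sum>k\<le>d. sv m r * Im (gam m r (c k) * wc m r ^ k))"
      unfolding cd_poly_eval_def ip_sum_left using r c by (auto intro!: sum.cong simp: key2)
    also have "\<dots> = sv m r * Im (\<Sum>k\<le>d. gam m r (c k) * wc m r ^ k)"
      by (simp add: Im_sum sum_distrib_left)
    finally show ?thesis using False by simp
  qed
qed

lemma abs_eq: "x \<in> cd_carrier m \<Longrightarrow> cd_abs m x = sqrt (ip m x x)"
  by (simp add: cd_abs_def norm_mul cd_scale_def cd_one_def)

lemma ip_r_r: "ip m r r = (r 0)\<^sup>2 + ip m (rv r) (rv r)"
proof -
  define d where "d = cd_add (cd_scale (r 0) cd_one) (rv r)"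
  have rd: "r = d" unfolding d_def by (rule r_decomp)
  have "ip m r r = ip m d d" by (simp only: rd[symmetric])
  also have "\<dots> = (r 0)\<^sup>2 + ip m (rv r) (rv r)"
    unfolding d_def by (simp add: ip_add_left ip_add_right ip_scale_left ip_scale_right power2_eq_square)
  finally show ?thesis .
qed

lemma cmod_w: "r \<in> cd_carrier m \<Longrightarrow> cmod (wc m r) = cd_abs m r"
  by (simp add: abs_eq ip_r_r[of m r] wc_def cmod_def sv_def s2_nonneg)

lemma gam_one: "gam m r cd_one = 1"
  by (simp add: gam_def complex_eq_iff)

lemma gam_scale: "gam m r (cd_scale t x) = of_real t * gam m r x"
  by (simp add: gam_def complex_eq_iff ip_scale_left)

lemma gam_zero: "gam m r cd_zero = 0"
  by (simp add: gam_def complex_eq_iff)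

lemma gam_bound: "r \<in> cd_carrier m \<Longrightarrow> x \<in> cd_carrier m \<Longrightarrow> cmod (gam m r x) \<le> cd_abs m x"
proof -
  assume r: "r \<in> cd_carrier m" and x: "x \<in> cd_carrier m"
  define A where "A = ip m x cd_one"
  define B where "B = ip m x (rv r)"
  define s2 where "s2 = ip m (rv r) (rv r)"
  have key: "A\<^sup>2 + (B / sv m r)\<^sup>2 \<le> ip m x x"
  proof (cases "sv m r = 0")
    case True
    have "A\<^sup>2 = x 0 * x 0" by (simp add: A_def ip_one_right power2_eq_square)
    also have "\<dots> \<le> ip m x x" unfolding ip_def
      by (rule member_le_sum[where f="\<lambda>i. x i * x i"]) auto
    finally show ?thesis using True by simp
  next
    case False
    then have sp: "s2 > 0" using sv_sq[of m r] s2_nonneg[of m r] unfolding s2_def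
      by (metis mult_eq_0_iff order_le_imp_less_or_eq)
    define u where "u = cd_add x (cd_add (cd_scale (- A) cd_one) (cd_scale (- (B / s2)) (rv r)))"
    have "0 \<le> ip m u u" by (rule ip_self_nonneg)
    also have "ip m u u = ip m x x - A\<^sup>2 - B\<^sup>2 / s2"
      unfolding u_def using sp
      by (simp add: ip_add_left ip_add_right ip_scale_left ip_scale_right ip_sym[of m cd_one x]
          ip_sym[of m "rv r" x] A_def[symmetric] B_def[symmetric] s2_def[symmetric] field_simps power2_eq_square)
    finally have "A\<^sup>2 + B\<^sup>2 / s2 \<le> ip m x x" by simp
    moreover have "(B / sv m r)\<^sup>2 = B\<^sup>2 / s2" using sv_sq[of m r] unfolding s2_def
      by (simp add: power_divide power2_eq_square)
    ultimately show ?thesis by simp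
  qed
  have "cmod (gam m r x) = sqrt (A\<^sup>2 + (B / sv m r)\<^sup>2)"
    by (simp add: gam_def cmod_def A_def B_def)
  also have "\<dots> \<le> sqrt (ip m x x)" using key by simp
  also have "\<dots> = cd_abs m x" using x by (simp add: abs_eq)
  finally show ?thesis .
qed

lemma my_closed_contains_Sup:
  fixes S :: "real set"
  assumes "S \<noteq> {}" "bdd_above S" "closed S"
  shows "Sup S \<in> S"
proof (rule ccontr)
  assume nin: "Sup S \<notin> S"
  have "open (- S)" using assms(3) by (simp add: open_Compl)
  then obtain e where e: "e > 0" "\<And>y. dist y (Sup S) < e \<Longrightarrow> y \<in> - S"
    using nin unfolding open_dist by auto
  have "Sup S - e < Sup S" using e by simp
  then obtain x where x: "x \<in> S" "Sup S - e < x" using less_cSupE[OF _ assms(1)] by blast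
  have "x \<le> Sup S" using x assms(2) by (simp add: cSup_upper)
  then have "dist x (Sup S) < e" using x by (simp add: dist_real_def)
  then show False using e x by auto
qed

lemma my_CS:
  fixes a b :: "nat \<Rightarrow> real"
  shows "(\<Sum>i\<in>I. a i * b i)\<^sup>2 \<le> (\<Sum>i\<in>I. (a i)\<^sup>2) * (\<Sum>i\<in>I. (b i)\<^sup>2)"
proof (cases "(\<Sum>i\<in>I. (a i)\<^sup>2) = 0")
  case True
  then have "\<forall>i\<in>I. a i = 0 \<or> infinite I" 
    using sum_nonneg_eq_0_iff[of I "\<lambda>i. (a i)\<^sup>2"] by auto
  then have "(\<Sum>i\<in>I. a i * b i) = 0"
    by (cases "finite I") auto
  then show ?thesis by (simp add: True)
next
  case False
  define A where "A = (\<Sum>i\<in>I. (a i)\<^sup>2)"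
  define B where "B = (\<Sum>i\<in>I. (b i)\<^sup>2)"
  define C where "C = (\<Sum>i\<in>I. a i * b i)"
  define t where "t = C / A"
  have Apos: "A > 0" using False unfolding A_def by (simp add: sum_nonneg order.not_eq_order_implies_strict)
  have "0 \<le> (\<Sum>i\<in>I. (t * a i - b i)\<^sup>2)" by (simp add: sum_nonneg)
  also have "\<dots> = t\<^sup>2 * A - 2 * t * C + B"
    unfolding A_def B_def C_def
    by (simp add: power2_diff sum.distrib sum_subtractf sum_distrib_left power_mult_distrib algebra_simps)
  also have "\<dots> = B - C\<^sup>2 / A" using Apos unfolding t_def by (simp add: field_simps power2_eq_square)
  finally have "C\<^sup>2 / A \<le> B" by simp
  then have "C\<^sup>2 \<le> A * B" using Apos by (simp add: field_simps)
  then show ?thesis unfolding A_def B_def C_def .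
qed

lemma geom_bound:
  fixes x K :: real
  assumes "0 \<le> x" "0 \<le> K" "x ^ d \<le> K * (\<Sum>k<d. x ^ k)"
  shows "x < 1 + K"
proof (cases "x < 1")
  case True then show ?thesis using assms by simp
next
  case False
  then have x1: "x \<ge> 1" by simp
  have geo: "(x - 1) * (\<Sum>k<d. x ^ k) = x ^ d - 1"
    using one_diff_power_eq[of x d] by (simp add: algebra_simps)
  have pd: "x ^ d \<ge> 1" using x1 by (simp add: one_le_power)
  show ?thesis
  proof (cases "K = 0")
    case True then show ?thesis using assms pd by simp
  next
    case False
    then have Kp: "K > 0" using assms by simp
    have "(x - 1) * x ^ d \<le> (x - 1) * (K * (\<Sum>k<d. x ^ k))"
      using assms(3) x1 by (simp add: mult_left_mono)
    also have "\<dots> = K * (x ^ d - 1)" by (subst mult.left_commute) (simp only: geo)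
    also have "\<dots> < K * x ^ d" using Kp by simp
    finally have "(x - 1) * x ^ d < K * x ^ d" .
    then have "x - 1 < K" using pd by (simp add: mult_less_cancel_right)
    then show ?thesis by simp
  qed
qed

lemma rb3:
  fixes x :: real
  assumes x: "0 \<le> x" and b: "\<forall>k<d. 0 \<le> b k" and r: "x ^ d \<le> (\<Sum>k<d. b k * x ^ k)"
  shows "x \<le> max 1 (\<Sum>k<d. b k)"
proof (cases "x \<le> 1")
  case True then show ?thesis by simp
next
  case False
  then have x1: "x > 1" by simp
  have d: "d \<ge> 1"
  proof (rule ccontr)
    assume "\<not> d \<ge> 1" then have "d = 0" by simp
    then show False using r by simp
  qed
  have "x ^ d \<le> (\<Sum>k<d. b k * x ^ k)" by (rule r)
  also have "\<dots> \<le> (\<Sum>k<d. b k * x ^ (d - 1))"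
    by (rule sum_mono) (use b x1 in \<open>auto intro!: mult_left_mono power_increasing\<close>)
  also have "\<dots> = (\<Sum>k<d. b k) * x ^ (d - 1)" by (simp add: sum_distrib_right)
  finally have "x * x ^ (d - 1) \<le> (\<Sum>k<d. b k) * x ^ (d - 1)"
    using d by (metis One_nat_def Suc_pred less_eq_Suc_le power_Suc)
  then have "x \<le> (\<Sum>k<d. b k)" using x1 by (simp add: mult_le_cancel_right)
  then show ?thesis by simp
qed

lemma rb2:
  fixes x M :: real
  assumes x: "0 \<le> x" and b: "\<forall>k<d. 0 \<le> b k \<and> b k \<le> M" and M: "0 \<le> M"
    and r: "x ^ d \<le> (\<Sum>k<d. b k * x ^ k)"
  shows "x < 1 + M"
proof (rule geom_bound[OF x M])
  have "(\<Sum>k<d. b k * x ^ k) \<le> (\<Sum>k<d. M * x ^ k)"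
    by (rule sum_mono) (use b x in \<open>auto intro!: mult_right_mono\<close>)
  then show "x ^ d \<le> M * (\<Sum>k<d. x ^ k)" using r by (simp add: sum_distrib_left)
qed

lemma rb1:
  fixes x :: real
  assumes x: "0 \<le> x" and b: "\<forall>k<d. 0 \<le> b k" and r: "x ^ d \<le> (\<Sum>k<d. b k * x ^ k)"
  shows "x < sqrt (1 + (\<Sum>k<d. (b k)\<^sup>2))"
proof -
  have "(x ^ d)\<^sup>2 \<le> (\<Sum>k<d. b k * x ^ k)\<^sup>2"
    using r x by (simp add: power_mono)
  also have "\<dots> \<le> (\<Sum>k<d. (b k)\<^sup>2) * (\<Sum>k<d. (x ^ k)\<^sup>2)" by (rule my_CS)
  finally have "(x\<^sup>2) ^ d \<le> (\<Sum>k<d. (b k)\<^sup>2) * (\<Sum>k<d. (x\<^sup>2) ^ k)"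
    by (simp add: power_mult[symmetric] mult.commute)
  then have "x\<^sup>2 < 1 + (\<Sum>k<d. (b k)\<^sup>2)"
    by (rule geom_bound[rotated 2]) (auto simp: sum_nonneg)
  then have "sqrt (x\<^sup>2) < sqrt (1 + (\<Sum>k<d. (b k)\<^sup>2))" by (simp only: real_sqrt_less_iff)
  then show ?thesis using x by simp
qed

lemma sup_bound:
  fixes S :: "real set"
  assumes S: "\<forall>x\<in>S. 0 \<le> x \<and> x ^ d \<le> (\<Sum>k<d. b k * x ^ k)" and b: "\<forall>k<d. 0 \<le> b k"
  shows "\<exists>t. (t = 0 \<or> (0 \<le> t \<and> t ^ d \<le> (\<Sum>k<d. b k * t ^ k))) \<and> Sup (insert 0 S) \<le> t"
proof -
  define T where "T = {x::real. 0 \<le> x \<and> x ^ d \<le> (\<Sum>k<d. b k * x ^ k)}"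
  have cT: "closed (insert 0 T)"
  proof -
    have "T = {x. 0 \<le> x} \<inter> {x. x ^ d \<le> (\<Sum>k<d. b k * x ^ k)}" unfolding T_def by auto
    moreover have "closed {x::real. 0 \<le> x}"
      by (rule closed_Collect_le) (intro continuous_intros)+
    moreover have "closed {x::real. x ^ d \<le> (\<Sum>k<d. b k * x ^ k)}"
      by (rule closed_Collect_le) (intro continuous_intros)+
    ultimately show ?thesis by (simp add: closed_Int closed_insert)
  qed
  have bdd: "bdd_above (insert 0 T)"
  proof (rule bdd_aboveI)
    fix x assume "x \<in> insert 0 T"
    then show "x \<le> max 1 (\<Sum>k<d. b k)"
      using rb3[OF _ b] unfolding T_def by auto
  qed
  have mem: "Sup (insert 0 T) \<in> insert 0 T"
    by (rule my_closed_contains_Sup[OF _ bdd cT]) simp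
  have "Sup (insert 0 S) \<le> Sup (insert 0 T)"
    by (rule cSup_subset_mono) (use S bdd in \<open>auto simp: T_def\<close>)
  then show ?thesis using mem unfolding T_def by blast
qed

lemma gen_bounds:
  fixes x :: real and bb b :: "nat \<Rightarrow> real"
  assumes bb0: "\<forall>k<d. 0 \<le> bb k" and bbM: "\<forall>k<d. bb k \<le> M" and M0: "0 \<le> M"
    and sq: "(\<Sum>k<d. (bb k)\<^sup>2) \<le> (\<Sum>k<n. (b k)\<^sup>2)"
    and sm: "(\<Sum>k<d. bb k) \<le> (\<Sum>k<n. b k)"
    and x: "x = 0 \<or> (0 \<le> x \<and> x ^ d \<le> (\<Sum>k<d. bb k * x ^ k))"
    and b0: "\<forall>k<n. 0 \<le> b k"
  shows "x < sqrt (1 + (\<Sum>k<n. (b k)\<^sup>2)) \<and> x < 1 + M \<and> x \<le> max 1 (\<Sum>k<n. b k)"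
proof -
  have S0: "0 \<le> (\<Sum>k<n. (b k)\<^sup>2)" by (simp add: sum_nonneg)
  have "1 \<le> sqrt (1 + (\<Sum>k<n. (b k)\<^sup>2))" using S0 by simp
  show ?thesis
  proof (cases "x = 0")
    case True
    then show ?thesis using S0 M0 by simp
  next
    case False
    then have x0: "0 \<le> x" and r: "x ^ d \<le> (\<Sum>k<d. bb k * x ^ k)" using x by auto
    have "x < sqrt (1 + (\<Sum>k<d. (bb k)\<^sup>2))" by (rule rb1[OF x0 bb0 r])
    also have "\<dots> \<le> sqrt (1 + (\<Sum>k<n. (b k)\<^sup>2))" using sq by simp
    finally have 1: "x < sqrt (1 + (\<Sum>k<n. (b k)\<^sup>2))" .
    have 2: "x < 1 + M" by (rule rb2[OF x0 _ M0 r]) (use bb0 bbM in auto)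
    have "x \<le> max 1 (\<Sum>k<d. bb k)" by (rule rb3[OF x0 bb0 r])
    also have "\<dots> \<le> max 1 (\<Sum>k<n. b k)" using sm by simp
    finally show ?thesis using 1 2 by simp
  qed
qed

lemma abs_nonneg: "x \<in> cd_carrier m \<Longrightarrow> 0 \<le> cd_abs m x"
  by (simp add: abs_eq ip_self_nonneg)

lemma monic_carrier:
  assumes "\<forall>k<n. a k \<in> cd_carrier m"
  shows "monic_coeffs n a k \<in> cd_carrier m"
  using assms by (simp add: monic_coeffs_def)

lemma deriv_carrier:
  assumes "\<forall>k<n. a k \<in> cd_carrier m"
  shows "deriv_coeffs (monic_coeffs n a) k \<in> cd_carrier m"
  using monic_carrier[OF assms] by (simp add: deriv_coeffs_def)

lemma root_f:
  assumes a: "\<forall>k<n. a k \<in> cd_carrier m" and r: "r \<in> cd_carrier m"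
    and root: "cd_poly_eval m (monic_coeffs n a) n r = cd_zero"
  shows "cd_abs m r ^ n \<le> (\<Sum>k<n. cd_abs m (a k) * cd_abs m r ^ k)"
proof -
  let ?w = "wc m r"
  have "(\<Sum>k\<le>n. gam m r (monic_coeffs n a k) * ?w ^ k) = 0"
    by (rule eval_root[OF r]) (use monic_carrier[OF a] root in auto)
  moreover have "(\<Sum>k\<le>n. gam m r (monic_coeffs n a k) * ?w ^ k) =
     (\<Sum>k<n. gam m r (monic_coeffs n a k) * ?w ^ k) + gam m r (monic_coeffs n a n) * ?w ^ n"
    by (simp only: lessThan_Suc_atMost[symmetric] sum.lessThan_Suc)
  moreover have "(\<Sum>k<n. gam m r (monic_coeffs n a k) * ?w ^ k) = (\<Sum>k<n. gam m r (a k) * ?w ^ k)"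
    by (rule sum.cong) (auto simp: monic_coeffs_def)
  moreover have "gam m r (monic_coeffs n a n) = 1" by (simp add: monic_coeffs_def gam_one)
  ultimately have "(\<Sum>k<n. gam m r (a k) * ?w ^ k) + ?w ^ n = 0" by simp
  then have "?w ^ n = - (\<Sum>k<n. gam m r (a k) * ?w ^ k)" by (simp add: eq_neg_iff_add_eq_0 add.commute)
  then have "cmod (?w ^ n) = cmod (\<Sum>k<n. gam m r (a k) * ?w ^ k)" by simp
  also have "\<dots> \<le> (\<Sum>k<n. cmod (gam m r (a k) * ?w ^ k))" by (rule norm_sum)
  also have "\<dots> \<le> (\<Sum>k<n. cd_abs m (a k) * cd_abs m r ^ k)"
    by (rule sum_mono) (use a r gam_bound in \<open>auto simp: norm_mult norm_power cmod_w abs_nonneg intro!: mult_right_mono\<close>)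
  finally show ?thesis using r by (simp add: norm_power cmod_w)
qed

lemma root_df:
  assumes a: "\<forall>k<n. a k \<in> cd_carrier m" and r: "r \<in> cd_carrier m" and n: "n = Suc N"
    and root: "cd_poly_eval m (deriv_coeffs (monic_coeffs n a)) N r = cd_zero"
  shows "cd_abs m r ^ N \<le> (\<Sum>k<N. cd_abs m (a (Suc k)) * cd_abs m r ^ k)"
proof -
  let ?w = "wc m r"
  have "(\<Sum>k\<le>N. gam m r (deriv_coeffs (monic_coeffs n a) k) * ?w ^ k) = 0"
    by (rule eval_root[OF r]) (use deriv_carrier[OF a] root in auto)
  moreover have "(\<Sum>k\<le>N. gam m r (deriv_coeffs (monic_coeffs n a) k) * ?w ^ k) =
     (\<Sum>k<N. gam m r (deriv_coeffs (monic_coeffs n a) k) * ?w ^ k) + gam m r (deriv_coeffs (monic_coeffs n a) N) * ?w ^ N"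
    by (simp only: lessThan_Suc_atMost[symmetric] sum.lessThan_Suc)
  moreover have "(\<Sum>k<N. gam m r (deriv_coeffs (monic_coeffs n a) k) * ?w ^ k) =
      (\<Sum>k<N. of_nat (Suc k) * gam m r (a (Suc k)) * ?w ^ k)"
    by (rule sum.cong) (use n in \<open>auto simp: monic_coeffs_def deriv_coeffs_def gam_scale\<close>)
  moreover have "gam m r (deriv_coeffs (monic_coeffs n a) N) = of_nat n"
    using n by (simp add: monic_coeffs_def deriv_coeffs_def gam_one gam_scale)
  ultimately have "(\<Sum>k<N. of_nat (Suc k) * gam m r (a (Suc k)) * ?w ^ k) + of_nat n * ?w ^ N = 0" by simp
  then have "of_nat n * ?w ^ N = - (\<Sum>k<N. of_nat (Suc k) * gam m r (a (Suc k)) * ?w ^ k)"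
    by (simp add: eq_neg_iff_add_eq_0 add.commute)
  then have "cmod (of_nat n * ?w ^ N) = cmod (\<Sum>k<N. of_nat (Suc k) * gam m r (a (Suc k)) * ?w ^ k)" by simp
  also have "\<dots> \<le> (\<Sum>k<N. cmod (of_nat (Suc k) * gam m r (a (Suc k)) * ?w ^ k))" by (rule norm_sum)
  also have "\<dots> \<le> (\<Sum>k<N. real n * (cd_abs m (a (Suc k)) * cd_abs m r ^ k))"
  proof (rule sum_mono)
    fix k assume k: "k \<in> {..<N}"
    have ak: "a (Suc k) \<in> cd_carrier m" using a k n by auto
    have "cmod (of_nat (Suc k) * gam m r (a (Suc k)) * ?w ^ k) = real (Suc k) * (cmod (gam m r (a (Suc k))) * cd_abs m r ^ k)"
      using r by (simp add: norm_mult norm_power cmod_w norm_of_nat del: of_nat_Suc)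
    also have "\<dots> \<le> real n * (cd_abs m (a (Suc k)) * cd_abs m r ^ k)"
      apply (rule mult_mono)
      using k n apply simp
        apply (rule mult_right_mono) using gam_bound[OF r ak] apply simp
      by (auto simp: abs_eq[OF r] ip_self_nonneg)
    finally show "cmod (of_nat (Suc k) * gam m r (a (Suc k)) * ?w ^ k) \<le> real n * (cd_abs m (a (Suc k)) * cd_abs m r ^ k)" .
  qed
  finally have "real n * cd_abs m r ^ N \<le> real n * (\<Sum>k<N. cd_abs m (a (Suc k)) * cd_abs m r ^ k)"
    using r by (simp add: norm_mult norm_power cmod_w sum_distrib_left)
  then show ?thesis using n by simp
qed

theorem corollary4p12:
  fixes m n :: nat and a :: "nat \<Rightarrow> nat \<Rightarrow> real"
  assumes "n \<ge> 1"
    and "\<forall>k<n. a k \<in> cd_carrier m"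
  shows "(\<forall>r\<in>cd_carrier m. cd_poly_eval m (monic_coeffs n a) n r = cd_zero \<longrightarrow>
            cd_abs m r < R1 m n a \<and> cd_abs m r < R2 m n a \<and> cd_abs m r \<le> R3 m n a)
       \<and> (\<forall>r\<in>cd_carrier m. cd_poly_eval m (deriv_coeffs (monic_coeffs n a)) (n - 1) r = cd_zero \<longrightarrow>
            cd_abs m r < R1 m n a \<and> cd_abs m r < R2 m n a \<and> cd_abs m r \<le> R3 m n a)
       \<and> cd_spec_rad m (monic_coeffs n a) n < R1 m n a
       \<and> cd_spec_rad m (deriv_coeffs (monic_coeffs n a)) (n - 1) < R1 m n a
       \<and> cd_spec_rad m (monic_coeffs n a) n < R2 m n a
       \<and> cd_spec_rad m (deriv_coeffs (monic_coeffs n a)) (n - 1) < R2 m n a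
       \<and> cd_spec_rad m (monic_coeffs n a) n \<le> R3 m n a
       \<and> cd_spec_rad m (deriv_coeffs (monic_coeffs n a)) (n - 1) \<le> R3 m n a"
proof -
  note a = assms(2)
  obtain N where n: "n = Suc N" using assms(1) by (cases n) auto
  have nN: "n - 1 = N" using n by simp
  define b where "b = (\<lambda>k. cd_abs m (a k))"
  have b0: "\<forall>k<n. 0 \<le> b k" using a by (simp add: b_def abs_nonneg)
  define M where "M = (MAX k\<in>{..<n}. cd_abs m (a k))"
  have Mge: "\<forall>k<n. b k \<le> M" unfolding b_def M_def by (auto intro!: Max_ge)
  have M0: "0 \<le> M" using Mge b0 n by (meson order_trans zero_less_Suc)
  have R1e: "R1 m n a = sqrt (1 + (\<Sum>k<n. (b k)\<^sup>2))" by (simp add: R1_def b_def)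
  have R2e: "R2 m n a = 1 + M" by (simp add: R2_def M_def)
  have R3e: "R3 m n a = max 1 (\<Sum>k<n. b k)" by (simp add: R3_def b_def)
  have shift: "\<And>g :: nat \<Rightarrow> real. (\<forall>k<n. 0 \<le> g k) \<Longrightarrow> (\<Sum>k<N. g (Suc k)) \<le> (\<Sum>k<n. g k)"
    unfolding n sum.lessThan_Suc_shift by auto
  have sqD: "(\<Sum>k<N. (b (Suc k))\<^sup>2) \<le> (\<Sum>k<n. (b k)\<^sup>2)"
    using shift[of "\<lambda>k. (b k)\<^sup>2"] by simp
  have smD: "(\<Sum>k<N. b (Suc k)) \<le> (\<Sum>k<n. b k)"
    using shift[of b] b0 by simp
  have b0D: "\<forall>k<N. 0 \<le> b (Suc k)" using b0 n by simp
  have MD: "\<forall>k<N. b (Suc k) \<le> M" using Mge n by simp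
  have GF: "\<And>x. x = 0 \<or> (0 \<le> x \<and> x ^ n \<le> (\<Sum>k<n. b k * x ^ k)) \<Longrightarrow>
       x < R1 m n a \<and> x < R2 m n a \<and> x \<le> R3 m n a"
    unfolding R1e R2e R3e by (rule gen_bounds[OF b0 Mge M0 order_refl order_refl _ b0])
  have GD: "\<And>x. x = 0 \<or> (0 \<le> x \<and> x ^ N \<le> (\<Sum>k<N. b (Suc k) * x ^ k)) \<Longrightarrow>
       x < R1 m n a \<and> x < R2 m n a \<and> x \<le> R3 m n a"
    unfolding R1e R2e R3e by (rule gen_bounds[OF b0D MD M0 sqD smD _ b0])
  define SF where "SF = {cd_abs m r |r. r \<in> cd_carrier m \<and> cd_poly_eval m (monic_coeffs n a) n r = cd_zero}"
  define SD where "SD = {cd_abs m r |r. r \<in> cd_carrier m \<and> cd_poly_eval m (deriv_coeffs (monic_coeffs n a)) N r = cd_zero}"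
  have SF: "\<forall>x\<in>SF. 0 \<le> x \<and> x ^ n \<le> (\<Sum>k<n. b k * x ^ k)"
    unfolding SF_def b_def using root_f[OF a] abs_nonneg by blast
  have SD: "\<forall>x\<in>SD. 0 \<le> x \<and> x ^ N \<le> (\<Sum>k<N. b (Suc k) * x ^ k)"
    unfolding SD_def b_def using root_df[OF a _ n] abs_nonneg by blast
  obtain tF where tF: "tF = 0 \<or> (0 \<le> tF \<and> tF ^ n \<le> (\<Sum>k<n. b k * tF ^ k))" "Sup (insert 0 SF) \<le> tF"
    using sup_bound[OF SF b0] by blast
  obtain tD where tD: "tD = 0 \<or> (0 \<le> tD \<and> tD ^ N \<le> (\<Sum>k<N. b (Suc k) * tD ^ k))" "Sup (insert 0 SD) \<le> tD"
    using sup_bound[OF SD b0D] by blast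
  have specF: "cd_spec_rad m (monic_coeffs n a) n = Sup (insert 0 SF)"
    by (simp add: cd_spec_rad_def SF_def)
  have specD: "cd_spec_rad m (deriv_coeffs (monic_coeffs n a)) (n - 1) = Sup (insert 0 SD)"
    unfolding cd_spec_rad_def SD_def nN ..
  have p1: "\<forall>r\<in>cd_carrier m. cd_poly_eval m (monic_coeffs n a) n r = cd_zero \<longrightarrow>
            cd_abs m r < R1 m n a \<and> cd_abs m r < R2 m n a \<and> cd_abs m r \<le> R3 m n a"
    using SF GF unfolding SF_def by blast
  have p2: "\<forall>r\<in>cd_carrier m. cd_poly_eval m (deriv_coeffs (monic_coeffs n a)) (n - 1) r = cd_zero \<longrightarrow>
            cd_abs m r < R1 m n a \<and> cd_abs m r < R2 m n a \<and> cd_abs m r \<le> R3 m n a"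
    using SD GD unfolding SD_def nN by blast
  have qF: "tF < R1 m n a \<and> tF < R2 m n a \<and> tF \<le> R3 m n a" by (rule GF[OF tF(1)])
  have qD: "tD < R1 m n a \<and> tD < R2 m n a \<and> tD \<le> R3 m n a" by (rule GD[OF tD(1)])
  show ?thesis
    using p1 p2 qF qD tF(2) tD(2) unfolding specF specD by linarith
qed

end
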